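(* Let $G=(V,E,w)$, $s$, $\tau$ (with $|\tau|\ge 2$) and a budget $b\ge 0$ be as in the context, and suppose that at least one feasible subgraph exists. Then among the maximizers of $\textsc{CD}_{\tau,s}(S)$ over all feasible subgraphs $S\subseteq G$, there is one that is a tree rooted at $s$, i.e. an out-arborescence rooted at $s$ (its underlying undirected graph is a tree, $s$ has in-degree $0$ and every other vertex has in-degree $1$).
   Context: Let $G=(V,E,w)$ be a finite directed graph with non-negative edge weights $w:E\to\mathbb{R}_{\ge 0}$. A path from $u$ to $v$ in a subgraph $S\subseteq G$ is a sequence $u=v_0\to v_1\to\cdots\to v_k=v$ ($k\ge 0$) with each $v_i\to v_{i+1}$ an edge of $S$; for $i\le j$, $w_P(v_i,v_j)=\sum_{m=i}^{j-1} w(v_m\to v_{m+1})$. A vertex $y$ is reachable from $x$ in $S$ if there is a path from $x$ to $y$ in $S$ (a vertex is reachable from itself). Fix a start vertex $s\in V$ and a finite target set $\tau\subseteq V\setminus\{s\}$ with $|\tau|\ge 2$. The cost of a subgraph $S$ is $w(S)=\sum_{e\in E(S)} w(e)$. For a subgraph $S$ containing $s$ and $\tau$ in which every target is reachable from $s$: for a path $P=v_0\to\cdots\to v_k$ in $S$ with $v_0=s$, $v_k=t\in\tau$, let $\ell$ be the largest index such that some target in $\tau\setminus\{t\}$ is reachable from $v_\ell$ in $S$; the last deceptive point is $l(P,t)=v_\ell$. The unique distance of $t\in\tau$ is $\textsc{U}_S(t)=\min\{w_P(l(P,t),t): P \text{ a path in } S \text{ from } s \text{ to } t\}$, and the counterdeceptiveness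 of $S$ is $\textsc{CD}_{\tau,s}(S)=\min_{t\in\tau}\textsc{U}_S(t)$. Given a budget $b\ge 0$, a subgraph $S\subseteq G$ is feasible if $s\in V(S)$, $\tau\subseteq V(S)$, every target is reachable from $s$ in $S$, and $w(S)\le b$. A maximizer is a feasible $S$ maximizing $\textsc{CD}_{\tau,s}(S)$ among feasible subgraphs. *)

theory Defs
  imports Complex_Main
begin

type_synonym 'v sgraph = "'v set \<times> ('v \<times> 'v) set"

definition is_subgraph :: "'v set \<Rightarrow> ('v \<times> 'v) set \<Rightarrow> 'v sgraph \<Rightarrow> bool" where
  "is_subgraph V E S \<longleftrightarrow> fst S \<subseteq> V \<and> snd S \<subseteq> E \<and> snd S \<subseteq> fst S \<times> fst S"

definition is_path :: "'v sgraph \<Rightarrow> 'v list \<Rightarrow> bool" where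
  "is_path S xs \<longleftrightarrow> xs \<noteq> [] \<and> set xs \<subseteq> fst S \<and>
     (\<forall>i. Suc i < length xs \<longrightarrow> (xs ! i, xs ! Suc i) \<in> snd S)"

definition is_path_from_to :: "'v sgraph \<Rightarrow> 'v list \<Rightarrow> 'v \<Rightarrow> 'v \<Rightarrow> bool" where
  "is_path_from_to S xs u v \<longleftrightarrow> is_path S xs \<and> hd xs = u \<and> last xs = v"

definition reachable :: "'v sgraph \<Rightarrow> 'v \<Rightarrow> 'v \<Rightarrow> bool" where
  "reachable S x y \<longleftrightarrow> (\<exists>xs. is_path_from_to S xs x y)"

definition path_weight :: "('v \<times> 'v \<Rightarrow> real) \<Rightarrow> 'v list \<Rightarrow> nat \<Rightarrow> nat \<Rightarrow> real" where
  "path_weight w xs i j = (\<Sum>m\<in>{i..<j}. w (xs ! m, xs ! Suc m))"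

definition cost :: "('v \<times> 'v \<Rightarrow> real) \<Rightarrow> 'v sgraph \<Rightarrow> real" where
  "cost w S = (\<Sum>e\<in>snd S. w e)"

definition last_deceptive_index :: "'v set \<Rightarrow> 'v sgraph \<Rightarrow> 'v list \<Rightarrow> 'v \<Rightarrow> nat" where
  "last_deceptive_index \<tau> S xs t =
     (GREATEST l. l < length xs \<and> (\<exists>t'\<in>\<tau> - {t}. reachable S (xs ! l) t'))"

text \<open>Unique distance U_S(t): the minimum (attained, written as infimum) over all
  paths P from s to t in S of w_P(l(P,t), t).\<close>
definition unique_dist ::
  "('v \<times> 'v \<Rightarrow> real) \<Rightarrow> 'v set \<Rightarrow> 'v \<Rightarrow> 'v sgraph \<Rightarrow> 'v \<Rightarrow> real" where
  "unique_dist w \<tau> s S t =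
     Inf {path_weight w xs (last_deceptive_index \<tau> S xs t) (length xs - 1) | xs.
            is_path_from_to S xs s t}"

definition CD :: "('v \<times> 'v \<Rightarrow> real) \<Rightarrow> 'v set \<Rightarrow> 'v \<Rightarrow> 'v sgraph \<Rightarrow> real" where
  "CD w \<tau> s S = Min (unique_dist w \<tau> s S ` \<tau>)"

definition feasible ::
  "'v set \<Rightarrow> ('v \<times> 'v) set \<Rightarrow> ('v \<times> 'v \<Rightarrow> real) \<Rightarrow> 'v \<Rightarrow> 'v set \<Rightarrow> real \<Rightarrow> 'v sgraph \<Rightarrow> bool" where
  "feasible V E w s \<tau> b S \<longleftrightarrow> is_subgraph V E S \<and> s \<in> fst S \<and> \<tau> \<subseteq> fst S \<and>
     (\<forall>t\<in>\<tau>. reachable S s t) \<and> cost w S \<le> b"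

definition maximizer ::
  "'v set \<Rightarrow> ('v \<times> 'v) set \<Rightarrow> ('v \<times> 'v \<Rightarrow> real) \<Rightarrow> 'v \<Rightarrow> 'v set \<Rightarrow> real \<Rightarrow> 'v sgraph \<Rightarrow> bool" where
  "maximizer V E w s \<tau> b S \<longleftrightarrow> feasible V E w s \<tau> b S \<and>
     (\<forall>S'. feasible V E w s \<tau> b S' \<longrightarrow> CD w \<tau> s S' \<le> CD w \<tau> s S)"

text \<open>Underlying undirected graph of S (as a multigraph: a loop or a pair of
  antiparallel edges counts as a cycle).\<close>
definition undir_adj :: "'v sgraph \<Rightarrow> ('v \<times> 'v) set" where
  "undir_adj S = {(u, v). (u, v) \<in> snd S \<or> (v, u) \<in> snd S}"

definition undir_connected :: "'v sgraph \<Rightarrow> bool" where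
  "undir_connected S \<longleftrightarrow> (\<forall>u\<in>fst S. \<forall>v\<in>fst S. (u, v) \<in> (undir_adj S)\<^sup>*)"

definition undir_acyclic :: "'v sgraph \<Rightarrow> bool" where
  "undir_acyclic S \<longleftrightarrow>
     (\<forall>v. (v, v) \<notin> snd S) \<and>
     (\<forall>u v. (u, v) \<in> snd S \<longrightarrow> (v, u) \<notin> snd S) \<and>
     \<not> (\<exists>cs. length cs \<ge> 3 \<and> distinct cs \<and>
            (\<forall>i. Suc i < length cs \<longrightarrow> (cs ! i, cs ! Suc i) \<in> undir_adj S) \<and>
            (last cs, hd cs) \<in> undir_adj S)"

definition undir_tree :: "'v sgraph \<Rightarrow> bool" where
  "undir_tree S \<longleftrightarrow> fst S \<noteq> {} \<and> undir_connected S \<and> undir_acyclic S"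

definition in_degree :: "'v sgraph \<Rightarrow> 'v \<Rightarrow> nat" where
  "in_degree S v = card {u. (u, v) \<in> snd S}"

definition out_arborescence :: "'v sgraph \<Rightarrow> 'v \<Rightarrow> bool" where
  "out_arborescence S r \<longleftrightarrow> r \<in> fst S \<and> undir_tree S \<and> in_degree S r = 0 \<and>
     (\<forall>v\<in>fst S - {r}. in_degree S v = 1)"

end

theory Submission
  imports Defs
begin

lemma path_sub:
  assumes "is_path T xs" "fst T \<subseteq> fst S" "snd T \<subseteq> snd S"
  shows "is_path S xs"
  using assms unfolding is_path_def by blast

lemma reach_sub:
  assumes "reachable T x y" "fst T \<subseteq> fst S" "snd T \<subseteq> snd S"
  shows "reachable S x y"
  using assms path_sub unfolding reachable_def is_path_from_to_def by blast

lemma path_snoc: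
  assumes "is_path_from_to S xs a b" "(b,c) \<in> snd S" "c \<in> fst S"
  shows "is_path_from_to S (xs@[c]) a c"
proof -
  have ne: "xs \<noteq> []" using assms(1) by (simp add: is_path_from_to_def is_path_def)
  have "\<forall>i. Suc i < length (xs@[c]) \<longrightarrow> ((xs@[c]) ! i, (xs@[c]) ! Suc i) \<in> snd S"
  proof (intro allI impI)
    fix i assume i: "Suc i < length (xs@[c])"
    show "((xs@[c]) ! i, (xs@[c]) ! Suc i) \<in> snd S"
    proof (cases "Suc i < length xs")
      case True thus ?thesis using assms(1) by (simp add: nth_append is_path_from_to_def is_path_def)
    next
      case False
      then have "i = length xs - 1" "Suc i = length xs" using i by auto
      then show ?thesis using assms ne by (simp add: nth_append is_path_from_to_def last_conv_nth)
    qed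
  qed
  then show ?thesis using assms ne by (auto simp: is_path_from_to_def is_path_def)
qed

lemma path_take:
  assumes "is_path S xs" "0 < k" "k \<le> length xs"
  shows "is_path S (take k xs)" "hd (take k xs) = hd xs" "last (take k xs) = xs ! (k - 1)"
proof -
  show "is_path S (take k xs)" using assms unfolding is_path_def
    by (auto dest: in_set_takeD)
  show "hd (take k xs) = hd xs" using assms by (simp add: is_path_def)
  show "last (take k xs) = xs ! (k - 1)" using assms
    by (simp add: last_conv_nth is_path_def)
qed

lemma pw_mono:
  assumes "is_path S xs" "snd S \<subseteq> E" "\<forall>e\<in>E. w e \<ge> 0" "i \<le> i'"
  shows "path_weight w xs i' (length xs - 1) \<le> path_weight w xs i (length xs - 1)"
  unfolding path_weight_def
  apply (rule sum_mono2)
  using assms unfolding is_path_def by force+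

lemma pw_nonneg:
  assumes "is_path S xs" "snd S \<subseteq> E" "\<forall>e\<in>E. w e \<ge> 0"
  shows "0 \<le> path_weight w xs i (length xs - 1)"
  unfolding path_weight_def
  apply (rule sum_nonneg)
  using assms unfolding is_path_def by force

lemma ud_mono:
  assumes sub: "fst T \<subseteq> fst S" "snd T \<subseteq> snd S" and SE: "snd S \<subseteq> E" and wn: "\<forall>e\<in>E. w e \<ge> 0"
    and t2: "\<exists>t'\<in>\<tau>-{t}. reachable T s t'" and rt: "reachable T s t"
  shows "unique_dist w \<tau> s S t \<le> unique_dist w \<tau> s T t"
  unfolding unique_dist_def
proof (rule cInf_mono)
  show "{path_weight w xs (last_deceptive_index \<tau> T xs t) (length xs - 1) |xs. is_path_from_to T xs s t} \<noteq> {}"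
    using rt unfolding reachable_def by blast
  show "bdd_below {path_weight w xs (last_deceptive_index \<tau> S xs t) (length xs - 1) |xs. is_path_from_to S xs s t}"
    unfolding bdd_below_def using pw_nonneg[OF _ SE wn] unfolding is_path_from_to_def by blast
  fix bb assume "bb \<in> {path_weight w xs (last_deceptive_index \<tau> T xs t) (length xs - 1) |xs. is_path_from_to T xs s t}"
  then obtain xs where bb: "bb = path_weight w xs (last_deceptive_index \<tau> T xs t) (length xs - 1)"
    and xs: "is_path_from_to T xs s t" by blast
  have xsS: "is_path_from_to S xs s t" using xs path_sub[OF _ sub] unfolding is_path_from_to_def by blast
  define PT where "PT = (\<lambda>l. l < length xs \<and> (\<exists>t'\<in>\<tau> - {t}. reachable T (xs ! l) t'))"
  define PS where "PS = (\<lambda>l. l < length xs \<and> (\<exists>t'\<in>\<tau> - {t}. reachable S (xs ! l) t'))"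
  have "PT 0" using xs t2 unfolding PT_def is_path_from_to_def is_path_def by (auto simp: hd_conv_nth)
  then have "PT (Greatest PT)" by (rule GreatestI_nat[where b="length xs"]) (auto simp: PT_def)
  then have "PS (Greatest PT)" unfolding PT_def PS_def using reach_sub[OF _ sub] by blast
  then have le: "Greatest PT \<le> Greatest PS" by (rule Greatest_le_nat[where b="length xs"]) (auto simp: PS_def)
  have "path_weight w xs (last_deceptive_index \<tau> S xs t) (length xs - 1) \<le> bb"
    unfolding bb last_deceptive_index_def
    using pw_mono[OF _ SE wn le] xsS unfolding PT_def PS_def is_path_from_to_def by blast
  then show "\<exists>a\<in>{path_weight w xs (last_deceptive_index \<tau> S xs t) (length xs - 1) |xs. is_path_from_to S xs s t}. a \<le> bb"
    using xsS by blast
qed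


lemma tree_exists:
  assumes sS: "s \<in> fst S"
  shows "\<exists>T. fst T = {v. reachable S s v} \<and> snd T \<subseteq> snd S \<and> snd T \<subseteq> fst T \<times> fst T
    \<and> (\<forall>v\<in>fst T. reachable T s v) \<and> out_arborescence T s"
proof -
  define R where "R = {v. reachable S s v}"
  define d where "d = (\<lambda>v. LEAST n. \<exists>xs. is_path_from_to S xs s v \<and> length xs = Suc n)"
  have sR: "s \<in> R" unfolding R_def reachable_def is_path_from_to_def is_path_def
    using sS by (auto intro!: exI[of _ "[s]"])
  have "\<forall>v\<in>R-{s}. \<exists>q. (q,v) \<in> snd S \<and> q \<in> R \<and> d q < d v"
  proof
    fix v assume v: "v \<in> R - {s}"
    then obtain xs0 where "is_path_from_to S xs0 s v" unfolding R_def reachable_def by blast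
    moreover have "length xs0 = Suc (length xs0 - 1)" using calculation
      by (cases xs0) (auto simp: is_path_from_to_def is_path_def)
    ultimately have ex: "\<exists>n xs. is_path_from_to S xs s v \<and> length xs = Suc n" by blast
    then obtain xs where xs: "is_path_from_to S xs s v" and len: "length xs = Suc (d v)"
      unfolding d_def using LeastI_ex[OF ex] by blast
    have "d v \<noteq> 0"
    proof
      assume "d v = 0"
      then have "length xs = 1" using len by simp
      then have "hd xs = last xs" by (cases xs) auto
      then show False using xs v by (auto simp: is_path_from_to_def)
    qed
    define k where "k = d v"
    have k0: "0 < k" "k \<le> length xs" using \<open>d v \<noteq> 0\<close> len k_def by auto
    have pk: "is_path S (take k xs)" "hd (take k xs) = s" "last (take k xs) = xs ! (k - 1)"
    proof -
      have ip: "is_path S xs" using xs by (simp add: is_path_from_to_def)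
      show "is_path S (take k xs)" "hd (take k xs) = s" "last (take k xs) = xs ! (k - 1)"
        using path_take[OF ip k0] xs by (auto simp: is_path_from_to_def)
    qed
    define q where "q = xs ! (k - 1)"
    have pq: "is_path_from_to S (take k xs) s q" using pk q_def by (simp add: is_path_from_to_def)
    have "length (take k xs) = Suc (k - 1)" using k0 by simp
    then have "d q \<le> k - 1" unfolding d_def using pq by (intro Least_le) blast
    then have "d q < d v" using k0 k_def by simp
    moreover have "q \<in> R" using pq unfolding R_def reachable_def by blast
    moreover have "(q, v) \<in> snd S"
    proof -
      have "Suc (k-1) < length xs" using len k_def k0 by simp
      then have "(xs ! (k-1), xs ! Suc (k-1)) \<in> snd S" using xs by (simp add: is_path_from_to_def is_path_def)
      moreover have "xs ! Suc (k-1) = v"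
      proof -
        have "Suc (k-1) = length xs - 1" using len k_def k0 by simp
        moreover have "last xs = v" "xs \<noteq> []" using xs by (auto simp: is_path_from_to_def is_path_def)
        ultimately show ?thesis by (simp add: last_conv_nth)
      qed
      ultimately show ?thesis by (simp add: q_def)
    qed
    ultimately show "\<exists>q. (q,v) \<in> snd S \<and> q \<in> R \<and> d q < d v" by blast
  qed
  then obtain p where p: "\<And>v. v \<in> R - {s} \<Longrightarrow> (p v, v) \<in> snd S \<and> p v \<in> R \<and> d (p v) < d v"
    by metis
  define Et where "Et = {(p v, v) | v. v \<in> R \<and> v \<noteq> s}"
  define T where "T = (R, Et)"
  have RS: "R \<subseteq> fst S" unfolding R_def reachable_def is_path_from_to_def is_path_def
    by (auto simp: last_in_set)
  have Et_iff: "(a, c) \<in> Et \<longleftrightarrow> c \<in> R \<and> c \<noteq> s \<and> a = p c" for a c unfolding Et_def by blast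
  have EtS: "Et \<subseteq> snd S"
  proof
    fix e assume "e \<in> Et" then obtain a c where "e = (a,c)" "c \<in> R - {s}" "a = p c" using Et_iff by (cases e) auto
    then show "e \<in> snd S" using p[of c] by simp
  qed
  have EtR: "Et \<subseteq> R \<times> R"
  proof
    fix e assume "e \<in> Et" then obtain a c where "e = (a,c)" "c \<in> R - {s}" "a = p c" using Et_iff by (cases e) auto
    then show "e \<in> R \<times> R" using p[of c] by simp
  qed
  have Et_d: "(a, c) \<in> Et \<Longrightarrow> d a < d c" for a c
  proof -
    assume "(a, c) \<in> Et" then have "c \<in> R - {s}" "a = p c" using Et_iff by auto
    then show ?thesis using p[of c] by simp
  qed
  have reachT: "reachable T s v \<and> (s, v) \<in> Et\<^sup>*" if "v \<in> R" for v
    using that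
  proof (induction "d v" arbitrary: v rule: less_induct)
    case less
    show ?case
    proof (cases "v = s")
      case True
      then show ?thesis using sR unfolding reachable_def is_path_from_to_def is_path_def T_def
        by (intro conjI exI[of _ "[s]"]) auto
    next
      case False
      then have pv: "(p v, v) \<in> snd S" "p v \<in> R" "d (p v) < d v" using p less.prems by auto
      from less.hyps[OF pv(3) pv(2)] obtain xs where "is_path_from_to T xs s (p v)"
        and r: "(s, p v) \<in> Et\<^sup>*" unfolding reachable_def by blast
      moreover have "(p v, v) \<in> snd T" using Et_iff False less.prems by (simp add: T_def)
      moreover have "v \<in> fst T" using less.prems by (simp add: T_def)
      ultimately have "is_path_from_to T (xs @ [v]) s v" using path_snoc by metis
      moreover have "(s, v) \<in> Et\<^sup>*" using r \<open>(p v, v) \<in> snd T\<close>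
        by (simp add: T_def rtrancl_into_rtrancl)
      ultimately show ?thesis unfolding reachable_def by blast
    qed
  qed
  have adj_sym: "(undir_adj T)\<inverse> = undir_adj T" unfolding undir_adj_def by auto
  have Et_adj: "Et \<subseteq> undir_adj T" unfolding undir_adj_def T_def by auto
  have conn: "undir_connected T"
    unfolding undir_connected_def
  proof (intro ballI)
    fix u v assume "u \<in> fst T" "v \<in> fst T"
    then have "(s, u) \<in> Et\<^sup>*" "(s, v) \<in> Et\<^sup>*" using reachT by (auto simp: T_def)
    then have a: "(s, u) \<in> (undir_adj T)\<^sup>*" "(s, v) \<in> (undir_adj T)\<^sup>*"
      using rtrancl_mono[OF Et_adj] by auto
    have "(u, s) \<in> ((undir_adj T)\<inverse>)\<^sup>*" using a(1) by (simp add: rtrancl_converse)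
    then have "(u, s) \<in> (undir_adj T)\<^sup>*" using adj_sym by simp
    then show "(u, v) \<in> (undir_adj T)\<^sup>*" using a(2) by (rule rtrancl_trans)
  qed
  have adj_iff: "(x, y) \<in> undir_adj T \<longleftrightarrow> (x, y) \<in> Et \<or> (y, x) \<in> Et" for x y
    unfolding undir_adj_def T_def by simp
  have nocyc: "\<not> (\<exists>cs. length cs \<ge> 3 \<and> distinct cs \<and>
            (\<forall>i. Suc i < length cs \<longrightarrow> (cs ! i, cs ! Suc i) \<in> undir_adj T) \<and>
            (last cs, hd cs) \<in> undir_adj T)"
  proof
    assume "\<exists>cs. length cs \<ge> 3 \<and> distinct cs \<and>
            (\<forall>i. Suc i < length cs \<longrightarrow> (cs ! i, cs ! Suc i) \<in> undir_adj T) \<and>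
            (last cs, hd cs) \<in> undir_adj T"
    then obtain cs where n: "length cs \<ge> 3" and dist: "distinct cs"
      and cons: "\<And>i. Suc i < length cs \<Longrightarrow> (cs ! i, cs ! Suc i) \<in> undir_adj T"
      and lh: "(last cs, hd cs) \<in> undir_adj T" by blast
    define m where "m = length cs"
    have ne: "cs \<noteq> []" using n by auto
    have "Max (d ` set cs) \<in> d ` set cs" using ne by (intro Max_in) auto
    then obtain i where i: "i < m" "d (cs ! i) = Max (d ` set cs)"
      by (auto simp: in_set_conv_nth m_def)
    have imax: "d (cs ! j) \<le> d (cs ! i)" if "j < m" for j
      using i that by (auto simp: m_def)
    have nb: "y = p (cs ! i)" if "(cs ! i, y) \<in> undir_adj T" "y = cs ! j" "j < m" for y j
    proof -
      have "(cs ! i, y) \<notin> Et" using Et_d imax[OF that(3)] that(2) by force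
      then have "(y, cs ! i) \<in> Et" using that(1) adj_iff by blast
      then show ?thesis using Et_iff by blast
    qed
    have "\<exists>j k. j < m \<and> k < m \<and> j \<noteq> k \<and> (cs ! i, cs ! j) \<in> undir_adj T \<and> (cs ! i, cs ! k) \<in> undir_adj T"
    proof -
      have hd: "hd cs = cs ! 0" using ne by (simp add: hd_conv_nth)
      have lst: "last cs = cs ! (m - 1)" using ne by (simp add: last_conv_nth m_def)
      have c1: "(cs ! j, cs ! Suc j) \<in> undir_adj T" "(cs ! Suc j, cs ! j) \<in> undir_adj T"
        if "Suc j < m" for j using cons[of j] that adj_iff by (auto simp: m_def)
      have c2: "(cs ! 0, cs ! (m-1)) \<in> undir_adj T" "(cs ! (m-1), cs ! 0) \<in> undir_adj T"
        using lh adj_iff hd lst by auto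
      show ?thesis
      proof (cases "i = 0")
        case True
        then show ?thesis using c1[of 0] c2 n by (intro exI[of _ 1] exI[of _ "m-1"]) (auto simp: m_def)
      next
        case False
        show ?thesis
        proof (cases "i = m - 1")
          case True
          then show ?thesis using c1[of "m-2"] c2 n
            by (intro exI[of _ 0] exI[of _ "m-2"]) (auto simp: m_def numeral_eq_Suc Suc_diff_Suc)
        next
          case False
          then show ?thesis using c1[of "i-1"] c1[of i] \<open>i \<noteq> 0\<close> i(1)
            by (intro exI[of _ "i-1"] exI[of _ "Suc i"]) auto
        qed
      qed
    qed
    then obtain j k where jk: "j < m" "k < m" "j \<noteq> k" "(cs ! i, cs ! j) \<in> undir_adj T" "(cs ! i, cs ! k) \<in> undir_adj T"
      by blast
    have "cs ! j = cs ! k" using nb[OF jk(4) refl jk(1)] nb[OF jk(5) refl jk(2)] by simp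
    then show False using dist jk by (simp add: nth_eq_iff_index_eq m_def)
  qed
  have acyc: "undir_acyclic T" unfolding undir_acyclic_def
  proof (intro conjI allI impI)
    fix v show "(v, v) \<notin> snd T" using Et_d[of v v] by (auto simp: T_def)
  next
    fix u v assume "(u, v) \<in> snd T" then show "(v, u) \<notin> snd T"
      using Et_d[of u v] Et_d[of v u] by (auto simp: T_def)
  qed (rule nocyc)
  have indeg_s: "in_degree T s = 0" unfolding in_degree_def T_def using Et_iff by simp
  have indeg: "in_degree T v = 1" if "v \<in> fst T - {s}" for v
  proof -
    have "{u. (u, v) \<in> snd T} = {p v}" using that Et_iff by (auto simp: T_def)
    then show ?thesis by (simp add: in_degree_def)
  qed
  have "out_arborescence T s" unfolding out_arborescence_def undir_tree_def
    using sR conn acyc indeg_s indeg by (auto simp: T_def)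
  moreover have "\<forall>v\<in>fst T. reachable T s v" using reachT by (simp add: T_def)
  ultimately show ?thesis using EtS EtR by (intro exI[of _ T]) (auto simp: T_def R_def)
qed


theorem lemma3:
  fixes V :: "'v set" and E :: "('v \<times> 'v) set" and w :: "'v \<times> 'v \<Rightarrow> real"
    and s :: 'v and \<tau> :: "'v set" and b :: real
  assumes "finite V" and "E \<subseteq> V \<times> V" and "\<forall>e\<in>E. w e \<ge> 0"
    and "s \<in> V" and "\<tau> \<subseteq> V - {s}" and "finite \<tau>" and "card \<tau> \<ge> 2"
    and "b \<ge> 0"
    and "\<exists>S. feasible V E w s \<tau> b S"
  shows "\<exists>S. maximizer V E w s \<tau> b S \<and> out_arborescence S s"
proof -
  define F where "F = {S. feasible V E w s \<tau> b S}"
  have "F \<subseteq> Pow V \<times> Pow (V \<times> V)"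
    unfolding F_def feasible_def is_subgraph_def using assms(2) by auto
  moreover have "finite (Pow V \<times> Pow (V \<times> V))" using assms(1) by simp
  ultimately have finF: "finite F" by (rule finite_subset)
  have neF: "F \<noteq> {}" using assms(9) by (simp add: F_def)
  have "Max (CD w \<tau> s ` F) \<in> CD w \<tau> s ` F" using finF neF by (intro Max_in) auto
  then obtain S0 where S0: "S0 \<in> F" "CD w \<tau> s S0 = Max (CD w \<tau> s ` F)" by auto
  have S0max: "CD w \<tau> s S' \<le> CD w \<tau> s S0" if "feasible V E w s \<tau> b S'" for S'
    using that S0 finF by (simp add: F_def)
  have fS0: "feasible V E w s \<tau> b S0" using S0 by (simp add: F_def)
  then have sS0: "s \<in> fst S0" by (simp add: feasible_def)
  from tree_exists[OF sS0] obtain T where T: "fst T = {v. reachable S0 s v}" "snd T \<subseteq> snd S0"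
    "snd T \<subseteq> fst T \<times> fst T" "\<forall>v\<in>fst T. reachable T s v" "out_arborescence T s" by blast
  have sub1: "fst T \<subseteq> fst S0" using T(1) unfolding reachable_def is_path_from_to_def is_path_def
    by (auto simp: last_in_set)
  have S0E: "snd S0 \<subseteq> E" "fst S0 \<subseteq> V" using fS0 by (auto simp: feasible_def is_subgraph_def)
  have tauT: "\<tau> \<subseteq> fst T" using T(1) fS0 by (auto simp: feasible_def)
  have reachTt: "\<forall>t\<in>\<tau>. reachable T s t" using tauT T(4) by auto
  have finE: "finite E" using assms(1,2) finite_subset by blast
  have "cost w T \<le> cost w S0" unfolding cost_def
    using T(2) S0E assms(3) finite_subset[OF S0E(1) finE] by (intro sum_mono2) auto
  then have costT: "cost w T \<le> b" using fS0 by (simp add: feasible_def)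
  have fT: "feasible V E w s \<tau> b T"
    unfolding feasible_def is_subgraph_def
    using sub1 S0E T(2,3) tauT reachTt costT T(5) by (auto simp: out_arborescence_def)
  have taune: "\<tau> \<noteq> {}" using assms(7) by auto
  have ud: "unique_dist w \<tau> s S0 t \<le> unique_dist w \<tau> s T t" if t: "t \<in> \<tau>" for t
  proof (rule ud_mono[OF sub1 T(2) S0E(1) assms(3)])
    have "\<tau> - {t} \<noteq> {}" 
    proof -
      have "card (\<tau> - {t}) = card \<tau> - 1" using t assms(6) by simp
      then have "card (\<tau> - {t}) \<ge> 1" using assms(7) by simp
      then show ?thesis by (metis card.empty not_one_le_zero)
    qed
    then show "\<exists>t'\<in>\<tau>-{t}. reachable T s t'" using reachTt by blast
    show "reachable T s t" using reachTt t by blast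
  qed
  have "CD w \<tau> s S0 \<le> CD w \<tau> s T"
    unfolding CD_def
  proof (rule Min.boundedI)
    show "finite (unique_dist w \<tau> s T ` \<tau>)" using assms(6) by simp
    show "unique_dist w \<tau> s T ` \<tau> \<noteq> {}" using taune by simp
    fix x assume "x \<in> unique_dist w \<tau> s T ` \<tau>"
    then obtain t where "t \<in> \<tau>" "x = unique_dist w \<tau> s T t" by blast
    moreover have "Min (unique_dist w \<tau> s S0 ` \<tau>) \<le> unique_dist w \<tau> s S0 t"
      using calculation assms(6) by (intro Min_le) auto
    ultimately show "Min (unique_dist w \<tau> s S0 ` \<tau>) \<le> x" using ud by force
  qed
  then have "maximizer V E w s \<tau> b T" unfolding maximizer_def using fT S0max by force
  then show ?thesis using T(5) by blast
qed

end
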